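(* Let $A_1,\dots,A_m\in\mathbb{S}^n$, $b\in\mathbb{R}^m$, $C\in\mathbb{S}^n$, let Assumption 1 hold for some $p$, and assume $\mathcal{C}$ is compact. Let $f^\star$ be the optimal value of (SDP) and $R=\max_{X\in\mathcal{C}}\operatorname{tr}(X)<\infty$. For any $Y\in\mathcal{M}_p$, if $\|\operatorname{grad}g(Y)\|\le\varepsilon_g$ and $S(Y)\succeq-\frac{\varepsilon_H}{2}I_n$, then $0\le2(g(Y)-f^\star)\le\varepsilon_HR+\varepsilon_g\sqrt{R}$. If $I_n\in\operatorname{im}(\mathcal{A}^* )$, the right-hand side can be replaced by $\varepsilon_HR$; this holds in particular if all $X\in\mathcal{C}$ have the same trace and $\mathcal{C}$ contains a positive definite matrix.
   Context: $\mathbb{S}^n$: real symmetric $n\times n$ matrices; $\langle U,V\rangle=\operatorname{tr}(U^\top V)$, $\|\cdot\|$ Frobenius norm. $\mathcal{A}(X)_i=\langle A_i,X\rangle$, $\mathcal{A}^*(\nu)=\sum_i\nu_iA_i$. $\mathcal{C}=\{X\in\mathbb{S}^n:\mathcal{A}(X)=b,\ X\succeq0\}$ (non-empty); (SDP): minimize $\langle C,X\rangle$ over $\mathcal{C}$. $\mathcal{M}_p=\{Y\in\mathbb{R}^{n\times p}:\mathcal{A}(YY^\top)=b\}$, $g(Y)=\langle CY,Y\rangle$. Assumption 1 (for $p$): either (a) $A_1Y,\dots,A_mY$ are linearly independent for all $Y\in\mathcal{M}_p$, or (b) $\operatorname{span}\{A_1Y,\dots,A_mY\}$ has constant dimension on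 an open neighborhood of $\mathcal{M}_p$ in $\mathbb{R}^{n\times p}$. For $Y\in\mathcal{M}_p$: $G_{ij}=\langle A_iY,A_jY\rangle$, $\mu=G^\dagger\mathcal{A}(CYY^\top)$, $S(Y)=C-\mathcal{A}^*(\mu)$; the Riemannian gradient is $\operatorname{grad}g(Y)=2S(Y)Y$. *)

theory Defs
  imports "HOL-Analysis.Analysis"
begin

text \<open>Matrices are rendered as HOL-Analysis arrays: an n x p real matrix is
  real^'p^'n (row index 'n, column index 'p). The dimensions n, p, m are the
  cardinalities of the finite index types 'n, 'p, 'm.\<close>

definition sym_mat :: "real^'n^'n \<Rightarrow> bool" where
  "sym_mat M \<longleftrightarrow> transpose M = M"

definition frob :: "real^'q^'n \<Rightarrow> real^'q^'n \<Rightarrow> real" where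
  "frob U V = trace (transpose U ** V)"

definition frob_norm :: "real^'q^'n \<Rightarrow> real" where
  "frob_norm U = sqrt (frob U U)"

definition psd :: "real^'n^'n \<Rightarrow> bool" where
  "psd M \<longleftrightarrow> sym_mat M \<and> (\<forall>x. 0 \<le> x \<bullet> (M *v x))"

definition pd :: "real^'n^'n \<Rightarrow> bool" where
  "pd M \<longleftrightarrow> sym_mat M \<and> (\<forall>x. x \<noteq> 0 \<longrightarrow> 0 < x \<bullet> (M *v x))"

definition pinv :: "real^'k^'j \<Rightarrow> real^'j^'k" where
  "pinv G = (THE H. G ** H ** G = G \<and> H ** G ** H = H \<and>
                    transpose (G ** H) = G ** H \<and> transpose (H ** G) = H ** G)"

definition opA :: "(real^'n^'n)^'m \<Rightarrow> real^'n^'n \<Rightarrow> real^'m" where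
  "opA A X = (\<chi> i. frob (A$i) X)"

definition opAadj :: "(real^'n^'n)^'m \<Rightarrow> real^'m \<Rightarrow> real^'n^'n" where
  "opAadj A \<nu> = (\<Sum>i\<in>UNIV. (\<nu>$i) *\<^sub>R (A$i))"

definition feas :: "(real^'n^'n)^'m \<Rightarrow> real^'m \<Rightarrow> (real^'n^'n) set" where
  "feas A b = {X. sym_mat X \<and> opA A X = b \<and> psd X}"

definition Mp :: "(real^'n^'n)^'m \<Rightarrow> real^'m \<Rightarrow> (real^'p^'n) set" where
  "Mp A b = {Y. opA A (Y ** transpose Y) = b}"

definition gfun :: "real^'n^'n \<Rightarrow> real^'p^'n \<Rightarrow> real" where
  "gfun C Y = frob (C ** Y) Y"

definition Gram :: "(real^'n^'n)^'m \<Rightarrow> real^'p^'n \<Rightarrow> real^'m^'m" where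
  "Gram A Y = (\<chi> i j. frob (A$i ** Y) (A$j ** Y))"

definition mu :: "(real^'n^'n)^'m \<Rightarrow> real^'n^'n \<Rightarrow> real^'p^'n \<Rightarrow> real^'m" where
  "mu A C Y = pinv (Gram A Y) *v opA A (C ** Y ** transpose Y)"

definition Smat :: "(real^'n^'n)^'m \<Rightarrow> real^'n^'n \<Rightarrow> real^'p^'n \<Rightarrow> real^'n^'n" where
  "Smat A C Y = C - opAadj A (mu A C Y)"

definition rgrad :: "(real^'n^'n)^'m \<Rightarrow> real^'n^'n \<Rightarrow> real^'p^'n \<Rightarrow> real^'p^'n" where
  "rgrad A C Y = 2 *\<^sub>R (Smat A C Y ** Y)"

definition assumption1 :: "(real^'n^'n)^'m \<Rightarrow> real^'m \<Rightarrow> ('p::finite) itself \<Rightarrow> bool" where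
  "assumption1 A b (_::'p itself) \<longleftrightarrow>
     (\<forall>Y::real^'p^'n. Y \<in> Mp A b \<longrightarrow>
        (\<forall>c::'m \<Rightarrow> real. (\<Sum>i\<in>UNIV. c i *\<^sub>R (A$i ** Y)) = 0 \<longrightarrow> (\<forall>i. c i = 0)))
   \<or> (\<exists>U::(real^'p^'n) set. open U \<and> Mp A b \<subseteq> U \<and>
        (\<exists>r. \<forall>Y\<in>U. dim (span (range (\<lambda>i. A$i ** Y))) = r))"

end

theory Submission
  imports Defs
begin



lemma frob_inner: "frob U V = U \<bullet> V"
  unfolding frob_def trace_def matrix_matrix_mult_def transpose_def inner_vec_def
  apply simp by (rule sum.swap)

lemma frob_norm_eq: "frob_norm U = norm U"
  by (simp add: frob_norm_def frob_inner norm_eq_sqrt_inner)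

lemma frob_mul_right: "frob (M ** Y) Z = frob M (Z ** transpose Y)"
  unfolding frob_def matrix_transpose_mul
  by (metis matrix_mul_assoc trace_mul_sym)

lemma frob_mat1: "frob (mat 1) X = trace X"
  by (simp add: frob_def transpose_mat matrix_mul_lid)

lemma sym_entry: "sym_mat X \<Longrightarrow> X$i$j = X$j$i"
  unfolding sym_mat_def by (metis transpose_def vec_lambda_beta)

lemma sym_vmul: "sym_mat X \<Longrightarrow> y v* X = X *v y"
  unfolding vector_matrix_mult_def matrix_vector_mult_def
  by (simp add: sym_entry mult.commute)

lemma sym_quad: "sym_mat X \<Longrightarrow> y \<bullet> (X *v x) = x \<bullet> (X *v y)"
  by (metis dot_lmul_matrix sym_vmul inner_commute)

lemma frob_adj: "frob (opAadj A \<nu>) X = \<nu> \<bullet> opA A X"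
  unfolding frob_inner opAadj_def opA_def inner_sum_left inner_scaleR_left
  by (subst (2) inner_vec_def) simp

lemma linear_opA: "linear (opA A)"
  unfolding opA_def frob_inner
  by (rule linearI) (auto simp: vec_eq_iff inner_add_right)

lemma quad_disc:
  fixes a b c :: real
  assumes h: "\<And>t. 0 \<le> a + 2*b*t + c*t^2" and c: "0 \<le> c"
  shows "b^2 \<le> a*c"
proof (cases "c = 0")
  case True
  have "b = 0"
  proof (rule ccontr)
    assume "b \<noteq> 0"
    have "0 \<le> a + 2*b*(-(a+1)/(2*b)) + c*(-(a+1)/(2*b))^2" by (rule h)
    also have "\<dots> = -1" using True \<open>b \<noteq> 0\<close> by (simp add: field_simps)
    finally show False by simp
  qed
  then show ?thesis using True by simp
next
  case False
  then have cp: "c > 0" using c by simp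
  have "0 \<le> a + 2*b*(-b/c) + c*(-b/c)^2" by (rule h)
  also have "\<dots> = (a*c - b^2)/c" using cp by (simp add: field_simps power2_eq_square)
  finally show ?thesis using cp by (simp add: divide_nonneg_pos zero_le_divide_iff)
qed

lemma psd_cs:
  assumes "psd X"
  shows "(x \<bullet> (X *v y))^2 \<le> (x \<bullet> (X *v x)) * (y \<bullet> (X *v y))"
proof -
  have s: "sym_mat X" and p: "\<And>z. 0 \<le> z \<bullet> (X *v z)" using assms by (auto simp: psd_def)
  have "0 \<le> (x \<bullet> (X *v x)) + 2*(x \<bullet> (X *v y))*t + (y \<bullet> (X *v y))*t^2" for t
  proof -
    have "0 \<le> (x + t *\<^sub>R y) \<bullet> (X *v (x + t *\<^sub>R y))" by (rule p)
    also have "\<dots> = (x \<bullet> (X *v x)) + t * (y \<bullet> (X *v x)) + t * (x \<bullet> (X *v y)) + t*t*(y \<bullet> (X *v y))"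
      by (simp add: matrix_vector_right_distrib inner_add_left inner_add_right  algebra_simps)
    finally show ?thesis using sym_quad[OF s, of y x] by (simp add: power2_eq_square algebra_simps)
  qed
  then show ?thesis using quad_disc p by blast
qed

definition outer :: "real^'n \<Rightarrow> real^'n^'n" where
  "outer w = (\<chi> i j. w$i * w$j)"

lemma outer_mv: "outer w *v x = (w \<bullet> x) *\<^sub>R w"
  by (simp add: outer_def matrix_vector_mult_def vec_eq_iff inner_vec_def sum_distrib_left algebra_simps)

lemma frob_outer: "frob M (outer w) = w \<bullet> (M *v w)"
  by (simp add: frob_inner outer_def inner_vec_def matrix_vector_mult_def sum_distrib_left algebra_simps)

lemma sym_mat_iff: "sym_mat X \<longleftrightarrow> (\<forall>i j. X$i$j = X$j$i)"
  unfolding sym_mat_def transpose_def vec_eq_iff by auto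

lemma entry_quad: "axis j 1 \<bullet> (X *v axis i 1) = X$j$i"
  by (simp add: matrix_vector_mult_basis inner_axis' column_def)

lemma psd_entry_cs:
  assumes "psd X" shows "(X$j$i)^2 \<le> X$j$j * X$i$i"
  using psd_cs[OF assms, of "axis j 1" "axis i 1"] by (simp add: entry_quad)

lemma psd_diag_nonneg: "psd X \<Longrightarrow> 0 \<le> X$i$i"
  unfolding psd_def by (metis entry_quad)

lemma psd_frob_nonneg:
  assumes M: "psd M"
  shows "psd X \<Longrightarrow> 0 \<le> frob M X"
proof (induction "card {i. X$i$i \<noteq> 0}" arbitrary: X rule: less_induct)
  case less
  note XP = less.prems
  show ?case
  proof (cases "\<forall>i. X$i$i = 0")
    case True
    have "X$j$i = 0" for i j
      using psd_entry_cs[OF XP, of j i] True by simp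
    then have "X = 0" by (simp add: vec_eq_iff)
    then show ?thesis by (simp add: frob_inner)
  next
    case False
    then obtain i where "X$i$i \<noteq> 0" by blast
    define d where "d = X$i$i"
    have dpos: "d > 0" using psd_diag_nonneg[OF XP, of i] \<open>X$i$i \<noteq> 0\<close> d_def by simp
    define e :: "real^'a" where "e = axis i 1"
    define w where "w = (1 / sqrt d) *\<^sub>R (X *v e)"
    define X' where "X' = X - outer w"
    have symX: "sym_mat X" using XP by (simp add: psd_def)
    have sq: "sqrt d * sqrt d = d" using dpos by simp
    have wx: "(w \<bullet> x)^2 = (x \<bullet> (X *v e))^2 / d" for x
      using dpos by (simp add: w_def power2_eq_square inner_commute field_simps)
    have psdX': "psd X'"
      unfolding psd_def
    proof
      show "sym_mat X'" using symX unfolding X'_def sym_mat_iff outer_def by (simp add: mult.commute)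
      show "\<forall>x. 0 \<le> x \<bullet> (X' *v x)"
      proof
        fix x
        have cs: "(x \<bullet> (X *v e))^2 \<le> (x \<bullet> (X *v x)) * d"
          using psd_cs[OF XP, of x e] by (simp add: e_def entry_quad d_def)
        have "x \<bullet> (X' *v x) = x \<bullet> (X *v x) - (w \<bullet> x)^2"
          by (simp add: X'_def matrix_vector_mult_diff_rdistrib outer_mv inner_diff_right power2_eq_square inner_commute)
        also have "\<dots> = x \<bullet> (X *v x) - (x \<bullet> (X *v e))^2 / d" by (simp add: wx)
        also have "\<dots> \<ge> 0" using cs dpos by (simp add: field_simps)
        finally show "0 \<le> x \<bullet> (X' *v x)" .
      qed
    qed
    have wj: "w$j = X$j$i / sqrt d" for j
      by (simp add: w_def e_def matrix_vector_mult_basis column_def)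
    have X'jj: "X'$j$j = X$j$j - (X$j$i)^2 / d" for j
      using dpos by (simp add: X'_def outer_def wj power2_eq_square)
    have sub: "{j. X'$j$j \<noteq> 0} \<subset> {j. X$j$j \<noteq> 0}"
    proof
      show "{j. X'$j$j \<noteq> 0} \<subseteq> {j. X$j$j \<noteq> 0}"
      proof
        fix j assume "j \<in> {j. X'$j$j \<noteq> 0}"
        show "j \<in> {j. X$j$j \<noteq> 0}"
        proof (rule ccontr)
          assume "j \<notin> {j. X$j$j \<noteq> 0}"
          then have "X$j$j = 0" by simp
          then have "(X$j$i)^2 \<le> 0" using psd_entry_cs[OF XP, of j i] by simp
          then have "X$j$i = 0" by simp
          then have "X'$j$j = 0" using X'jj \<open>X$j$j = 0\<close> by simp
          then show False using \<open>j \<in> {j. X'$j$j \<noteq> 0}\<close> by simp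
        qed
      qed
      have "X'$i$i = 0" using X'jj[of i] dpos by (simp add: d_def power2_eq_square)
      then show "{j. X'$j$j \<noteq> 0} \<noteq> {j. X$j$j \<noteq> 0}" using \<open>X$i$i \<noteq> 0\<close> by blast
    qed
    have "card {j. X'$j$j \<noteq> 0} < card {j. X$j$j \<noteq> 0}"
      by (rule psubset_card_mono[OF _ sub]) simp
    then have "0 \<le> frob M X'" using less.hyps psdX' by blast
    moreover have "0 \<le> frob M (outer w)" using M by (simp add: frob_outer psd_def)
    moreover have "frob M X = frob M X' + frob M (outer w)"
      by (simp add: X'_def frob_inner inner_diff_right)
    ultimately show ?thesis by simp
  qed
qed



definition penrose :: "real^'k^'j \<Rightarrow> real^'j^'k \<Rightarrow> bool" where
  "penrose G H \<longleftrightarrow> G ** H ** G = G \<and> H ** G ** H = H \<and>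
                    transpose (G ** H) = G ** H \<and> transpose (H ** G) = H ** G"

lemma penrose_unique:
  assumes 1: "penrose G H1" and 2: "penrose G H2"
  shows "H1 = H2"
proof -
  have a1: "G ** H1 ** G = G" "H1 ** G ** H1 = H1" "transpose (G ** H1) = G ** H1" "transpose (H1 ** G) = H1 ** G"
    using 1 by (auto simp: penrose_def)
  have a2: "G ** H2 ** G = G" "H2 ** G ** H2 = H2" "transpose (G ** H2) = G ** H2" "transpose (H2 ** G) = H2 ** G"
    using 2 by (auto simp: penrose_def)
  have tG1: "transpose G = transpose G ** (G ** H2)"
    by (metis a1(1) a2(1,3) matrix_transpose_mul matrix_mul_assoc)
  have tG2: "transpose G = (H1 ** G) ** transpose G"
    by (metis a1(1,4) matrix_transpose_mul matrix_mul_assoc)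
  have "H1 = H1 ** (G ** H1)" by (metis a1(2) matrix_mul_assoc)
  also have "\<dots> = H1 ** (transpose H1 ** transpose G)" by (metis a1(3) matrix_transpose_mul)
  also have "\<dots> = H1 ** (transpose H1 ** (transpose G ** (G ** H2)))" using tG1 by metis
  also have "\<dots> = H1 ** (transpose (G ** H1)) ** (G ** H2)" by (simp add: matrix_transpose_mul matrix_mul_assoc)
  also have "\<dots> = H1 ** G ** H2" by (metis a1(2,3) matrix_mul_assoc)
  finally have e1: "H1 = H1 ** G ** H2" .
  have "H2 = (H2 ** G) ** H2" by (metis a2(2))
  also have "\<dots> = (transpose G ** transpose H2) ** H2" by (metis a2(4) matrix_transpose_mul)
  also have "\<dots> = (((H1 ** G) ** transpose G) ** transpose H2) ** H2" using tG2 by metis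
  also have "\<dots> = (H1 ** G) ** transpose (H2 ** G) ** H2" by (simp add: matrix_transpose_mul matrix_mul_assoc)
  also have "\<dots> = H1 ** G ** H2" by (metis a2(2,4) matrix_mul_assoc)
  finally show ?thesis using e1 by simp
qed

lemma sym_from_op:
  fixes M :: "real^'n^'n"
  assumes "\<And>x y. (M *v x) \<bullet> y = x \<bullet> (M *v y)"
  shows "transpose M = M"
proof -
  have "M$i$j = M$j$i" for i j
    using assms[of "axis j 1" "axis i 1"] entry_quad[of i M j] entry_quad[of j M i]
    by (simp add: inner_commute)
  then show ?thesis unfolding transpose_def vec_eq_iff by auto
qed

lemma penrose_exists_sym:
  fixes G :: "real^'m^'m"
  assumes sG: "sym_mat G"
  shows "\<exists>H. penrose G H"
proof -
  define Z where "Z = range (\<lambda>x. G *v x)"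
  have subZ: "subspace Z" unfolding Z_def
    by (rule linear_subspace_image[OF matrix_vector_mul_linear subspace_UNIV])
  have spZ: "span Z = Z" using subZ by (simp add: span_eq_iff)
  have kerZ: "u \<bullet> z = 0" if "G *v u = 0" "z \<in> Z" for u z
  proof -
    obtain v where "z = G *v v" using \<open>z \<in> Z\<close> Z_def by auto
    then show ?thesis using sym_quad[OF sG, of u v] that(1) by simp
  qed
  have perpker: "G *v u = 0" if "\<forall>z\<in>Z. orthogonal u z" for u
  proof -
    let ?y = "G *v u"
    have "?y \<bullet> ?y = u \<bullet> (G *v ?y)" using sym_quad[OF sG, of ?y u] by simp
    also have "\<dots> = 0" using that Z_def by (auto simp: orthogonal_def)
    finally show ?thesis by simp
  qed
  have injZ: "inj_on (\<lambda>x. G *v x) (span Z)"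
  proof (rule inj_onI)
    fix w1 w2 assume w: "w1 \<in> span Z" "w2 \<in> span Z" "G *v w1 = G *v w2"
    have "w1 - w2 \<in> Z" using w spZ subZ by (simp add: subspace_diff)
    moreover have "G *v (w1 - w2) = 0" using w by (simp add: matrix_vector_mult_diff_distrib)
    ultimately have "(w1 - w2) \<bullet> (w1 - w2) = 0" using kerZ by blast
    then show "w1 = w2" by simp
  qed
  obtain g where g: "range g \<subseteq> span Z" "linear g" "\<And>x. x \<in> span Z \<Longrightarrow> g (G *v x) = x"
    using linear_inj_on_left_inverse[OF matrix_vector_mul_linear injZ] by blast
  have gZ: "g v \<in> Z" for v using g(1) spZ by auto
  have ginv: "x \<in> Z \<Longrightarrow> g (G *v x) = x" for x using g(3) spZ by auto
  have dec: "\<exists>y z. y \<in> Z \<and> (\<forall>w\<in>Z. orthogonal z w) \<and> x = y + z" for x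
    using orthogonal_subspace_decomp_exists[of Z x] spZ by metis
  define Pf where "Pf x = g (G *v x)" for x
  have PfZ: "Pf x \<in> Z" for x by (simp add: Pf_def gZ)
  have GPf: "G *v Pf x = G *v x" and Pfperp: "\<forall>w\<in>Z. orthogonal (x - Pf x) w" for x
  proof -
    obtain y z where yz: "y \<in> Z" "\<forall>w\<in>Z. orthogonal z w" "x = y + z" using dec by blast
    have "G *v z = 0" using perpker yz(2) by blast
    then have "G *v x = G *v y" using yz(3) by (simp add: matrix_vector_right_distrib)
    then have "Pf x = y" using ginv yz(1) Pf_def by simp
    then show "G *v Pf x = G *v x" "\<forall>w\<in>Z. orthogonal (x - Pf x) w" using \<open>G *v x = G *v y\<close> yz by auto
  qed
  have Pffix: "v \<in> Z \<Longrightarrow> Pf v = v" for v by (simp add: Pf_def ginv)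
  have GgZ: "v \<in> Z \<Longrightarrow> G *v g v = v" for v
  proof -
    assume "v \<in> Z" then obtain u where "v = G *v u" using Z_def by auto
    then show ?thesis using GPf[of u] by (simp add: Pf_def)
  qed
  have Pfsym1: "Pf x \<bullet> y = Pf x \<bullet> Pf y" for x y
  proof -
    have "Pf x \<bullet> (y - Pf y) = 0" using Pfperp[of y] PfZ[of x] by (simp add: orthogonal_def inner_commute)
    then show ?thesis by (simp add: inner_diff_right)
  qed
  have Pfsym: "Pf x \<bullet> y = x \<bullet> Pf y" for x y
    using Pfsym1[of x y] Pfsym1[of y x] by (simp add: inner_commute)
  have linPf: "linear Pf" unfolding Pf_def
    using linear_compose[OF matrix_vector_mul_linear g(2)] by (simp add: o_def)
  define h where "h x = g (Pf x)" for x
  have linh: "linear h" unfolding h_def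
    using linear_compose[OF linPf g(2)] by (simp add: o_def)
  define H where "H = matrix h"
  have Hv: "H *v x = h x" for x by (simp add: H_def matrix_works[OF linh[folded linear_matrix_vector_mul_eq]])
  have GH: "G *v (H *v x) = Pf x" for x by (simp add: Hv h_def GgZ PfZ)
  have HG: "H *v (G *v x) = Pf x" for x
    by (simp add: Hv h_def Pffix Z_def Pf_def[symmetric])
  have GgPf: "G *v g (Pf x) = Pf x" for x by (simp add: GgZ PfZ)
  have PfPf: "Pf (Pf x) = Pf x" for x by (simp add: Pffix PfZ)
  have "G ** H ** G = G" by (simp add: matrix_eq matrix_vector_mul_assoc[symmetric] HG GPf)
  moreover have "H ** G ** H = H"
    by (simp add: matrix_eq matrix_vector_mul_assoc[symmetric] Hv h_def GgPf PfPf)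
  moreover have "transpose (G ** H) = G ** H"
    by (rule sym_from_op) (simp add: matrix_vector_mul_assoc[symmetric] GH Pfsym)
  moreover have "transpose (H ** G) = H ** G"
    by (rule sym_from_op) (simp add: matrix_vector_mul_assoc[symmetric] HG Pfsym)
  ultimately show ?thesis unfolding penrose_def by blast
qed

lemma pinv_sym:
  fixes G :: "real^'m^'m"
  assumes "sym_mat G"
  shows "G ** pinv G ** G = G"
proof -
  have "\<exists>!H. penrose G H" using penrose_exists_sym[OF assms] penrose_unique by blast
  then have "penrose G (THE H. penrose G H)" by (rule theI')
  moreover have "pinv G = (THE H. penrose G H)" by (simp add: pinv_def penrose_def)
  ultimately show ?thesis by (simp add: penrose_def)
qed



lemma linear_opAadj: "linear (opAadj A)"
  unfolding opAadj_def
  by (rule linearI) (simp_all add: scaleR_add_left sum.distrib scaleR_sum_right)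

lemma pd_lower:
  fixes X0 :: "real^'n^'n"
  assumes "pd X0"
  obtains c where "c > 0" "\<And>x. c * (x \<bullet> x) \<le> x \<bullet> (X0 *v x)"
proof -
  let ?f = "\<lambda>x. x \<bullet> (X0 *v x)"
  have cont: "continuous_on (sphere 0 1) ?f"
    by (intro continuous_intros matrix_vector_mult_linear_continuous_on[unfolded o_def])
  have ne: "sphere (0::real^'n) 1 \<noteq> {}"
  proof -
    obtain i :: 'n where True by simp
    have "axis i (1::real) \<in> sphere 0 1" by (simp add: norm_axis_1)
    then show ?thesis by blast
  qed
  obtain u where u: "u \<in> sphere 0 1" "\<And>y. y \<in> sphere 0 1 \<Longrightarrow> ?f u \<le> ?f y"
    using continuous_attains_inf[OF compact_sphere ne cont] by blast
  have "u \<noteq> 0" using u(1) by auto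
  then have cpos: "?f u > 0" using assms by (simp add: pd_def)
  have "?f u * (x \<bullet> x) \<le> ?f x" for x
  proof (cases "x = 0")
    case True then show ?thesis by simp
  next
    case False
    define v where "v = (1 / norm x) *\<^sub>R x"
    have "v \<in> sphere 0 1" using False by (simp add: v_def)
    then have le: "?f u \<le> ?f v" using u(2) by blast
    have xv: "x = norm x *\<^sub>R v" using False by (simp add: v_def)
    have "?f x = (norm x)^2 * ?f v"
      by (subst xv, subst xv) (simp add: matrix_vector_mult_scaleR power2_eq_square)
    moreover have "x \<bullet> x = (norm x)^2" by (simp add: power2_norm_eq_inner)
    ultimately show ?thesis using le by (metis mult_right_mono mult.commute zero_le_power2)
  qed
  then show ?thesis using that cpos by blast
qed

lemma id_in_range:
  fixes A :: "(real^'n^'n)^'m" and b :: "real^'m"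
  assumes symA: "\<forall>i. sym_mat (A$i)"
    and tconst: "\<forall>X\<in>feas A b. trace X = t"
    and X0: "X0 \<in> feas A b" and pdX0: "pd X0"
  shows "mat 1 \<in> range (opAadj A)"
proof (rule ccontr)
  assume nin: "mat 1 \<notin> range (opAadj A)"
  let ?S = "range (\<lambda>i. A$i)"
  have subR: "subspace (range (opAadj A))"
    by (rule linear_subspace_image[OF linear_opAadj subspace_UNIV])
  have "A$i \<in> range (opAadj A)" for i
  proof
    have "(\<Sum>j\<in>UNIV. (axis i (1::real))$j *\<^sub>R A$j) = (\<Sum>j\<in>UNIV. if j = i then A$j else 0)"
      by (rule sum.cong) (auto simp: axis_def)
    then show "A$i = opAadj A (axis i 1)"
      by (simp add: opAadj_def)
  qed simp
  then have spanR: "span ?S \<subseteq> range (opAadj A)"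
    using span_minimal[OF _ subR] by blast
  have subSym: "subspace {M::real^'n^'n. sym_mat M}"
    unfolding subspace_def sym_mat_iff by simp
  have spanSym: "span ?S \<subseteq> {M. sym_mat M}"
    using span_minimal[OF _ subSym] symA by blast
  obtain u Z where uZ: "u \<in> span ?S" "\<And>w. w \<in> span ?S \<Longrightarrow> orthogonal Z w" "mat 1 = u + Z"
    using orthogonal_subspace_decomp_exists by blast
  have "Z \<noteq> 0" using uZ(1,3) spanR nin by auto
  have symZ: "sym_mat Z"
  proof -
    have "Z = mat 1 - u" using uZ(3) by simp
    moreover have "sym_mat u" using spanSym uZ(1) by blast
    ultimately show ?thesis unfolding sym_mat_iff by (simp add: mat_def)
  qed
  have AZi: "A$i \<bullet> Z = 0" for i
  proof -
    have "A$i \<in> span ?S" by (simp add: span_base)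
    then show "A$i \<bullet> Z = 0" using uZ(2) by (metis orthogonal_def inner_commute)
  qed
  have AZ: "opA A Z = 0"
    by (simp add: opA_def frob_inner vec_eq_iff AZi)
  have trZ: "trace Z > 0"
  proof -
    have "trace Z = (u + Z) \<bullet> Z" using uZ(3) by (metis frob_mat1 frob_inner)
    also have "\<dots> = Z \<bullet> Z" using uZ(2)[OF uZ(1)] by (metis inner_add_left inner_commute orthogonal_def add_0)
    finally show ?thesis using \<open>Z \<noteq> 0\<close> by simp
  qed
  obtain c where c: "c > 0" "\<And>x. c * (x \<bullet> x) \<le> x \<bullet> (X0 *v x)"
    using pd_lower[OF pdX0] by blast
  obtain K where K: "K > 0" "\<And>x. norm (Z *v x) \<le> norm x * K"
    using bounded_linear.pos_bounded[OF matrix_vector_mul_bounded_linear] by blast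
  define ep where "ep = c / K"
  have ep: "ep > 0" using c K by (simp add: ep_def)
  define X1 where "X1 = X0 + ep *\<^sub>R Z"
  have X0f: "sym_mat X0" "opA A X0 = b" "psd X0" using X0 by (auto simp: feas_def)
  have "X1 \<in> feas A b"
    unfolding feas_def
  proof (intro CollectI conjI)
    show "sym_mat X1" using X0f(1) symZ unfolding X1_def sym_mat_iff by simp
    show "opA A X1 = b" unfolding X1_def
      using X0f(2) AZ by (simp add: opA_def frob_inner vec_eq_iff inner_add_right)
    show "psd X1" unfolding psd_def
    proof
      show "sym_mat X1" using X0f(1) symZ unfolding X1_def sym_mat_iff by simp
      show "\<forall>x. 0 \<le> x \<bullet> (X1 *v x)"
      proof
        fix x :: "real^'n"
        have "\<bar>x \<bullet> (Z *v x)\<bar> \<le> norm x * norm (Z *v x)" by (rule Cauchy_Schwarz_ineq2)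
        also have "\<dots> \<le> norm x * (norm x * K)" using K(2) by (simp add: mult_left_mono)
        finally have zb: "\<bar>x \<bullet> (Z *v x)\<bar> \<le> K * (x \<bullet> x)"
          by (simp add: power2_norm_eq_inner[symmetric] power2_eq_square mult.commute mult.left_commute)
        have "ep * \<bar>x \<bullet> (Z *v x)\<bar> \<le> ep * (K * (x \<bullet> x))" using zb ep by (simp add: mult_left_mono)
        also have "\<dots> = c * (x \<bullet> x)" using K by (simp add: ep_def)
        finally have "ep * \<bar>x \<bullet> (Z *v x)\<bar> \<le> x \<bullet> (X0 *v x)" using c(2)[of x] by linarith
        moreover have "x \<bullet> (X1 *v x) = x \<bullet> (X0 *v x) + ep * (x \<bullet> (Z *v x))"
          by (simp add: X1_def matrix_vector_mult_add_rdistrib matrix_scaleR_vector_ac[symmetric] matrix_vector_mult_scaleR inner_add_right)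
        moreover have "- (ep * \<bar>x \<bullet> (Z *v x)\<bar>) \<le> ep * (x \<bullet> (Z *v x))"
        proof -
          have "- \<bar>x \<bullet> (Z *v x)\<bar> \<le> x \<bullet> (Z *v x)" by simp
          show ?thesis
            using abs_ge_minus_self[of "ep * (x \<bullet> (Z *v x))"] abs_mult[of ep "x \<bullet> (Z *v x)"] abs_of_pos[OF ep] by linarith
        qed
        ultimately show "0 \<le> x \<bullet> (X1 *v x)" by linarith
      qed
    qed
  qed
  then have "trace X1 = t" using tconst by blast
  moreover have "trace X0 = t" using tconst X0 by blast
  moreover have "trace X1 = trace X0 + ep * trace Z"
    unfolding X1_def frob_mat1[symmetric] frob_inner by (simp add: inner_add_right)
  ultimately show False using ep trZ by simp
qed




lemma frob_comm: "frob U V = frob V U"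
  by (simp add: frob_inner inner_commute)

lemma frob_mul_right2: "frob U (M ** Y) = frob (U ** transpose Y) M"
  by (metis frob_comm frob_mul_right)

lemma vmul_transpose: "x v* (Y::real^'p^'n) = transpose Y *v x"
  unfolding vector_matrix_mult_def matrix_vector_mult_def transpose_def vec_eq_iff
  by (auto intro!: sum.cong simp: mult.commute)

lemma YYt_feas:
  assumes "Y \<in> Mp A b"
  shows "Y ** transpose Y \<in> feas A b"
proof -
  have s: "sym_mat (Y ** transpose Y)"
    by (simp add: sym_mat_def matrix_transpose_mul transpose_transpose)
  have "x \<bullet> ((Y ** transpose Y) *v x) = (transpose Y *v x) \<bullet> (transpose Y *v x)" for x
    by (metis matrix_vector_mul_assoc dot_lmul_matrix vmul_transpose)
  then have "psd (Y ** transpose Y)" using s by (simp add: psd_def)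
  then show ?thesis using s assms by (simp add: feas_def Mp_def)
qed

lemma gram_sym: "sym_mat (Gram A Y)"
  by (simp add: sym_mat_iff Gram_def frob_comm)

lemma sym_perp_ker:
  fixes G :: "real^'m^'m"
  assumes sG: "sym_mat G" and z: "\<forall>w\<in>range ((*v) G). orthogonal z w"
  shows "G *v z = 0"
proof -
  let ?y = "G *v z"
  have "?y \<bullet> ?y = z \<bullet> (G *v ?y)" using sym_quad[OF sG, of ?y z] by simp
  also have "\<dots> = 0" using z by (auto simp: orthogonal_def)
  finally show ?thesis by simp
qed

lemma r_in_range:
  fixes A :: "(real^'n^'n)^'m" and Y :: "real^'p^'n"
  shows "opA A (C ** Y ** transpose Y) \<in> range ((*v) (Gram A Y))"
proof -
  let ?G = "Gram A Y"
  let ?r = "opA A (C ** Y ** transpose Y)"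
  have ri: "?r$i = frob (A$i ** Y) (C ** Y)" for i
    by (simp add: opA_def frob_mul_right)
  have sp: "span (range ((*v) ?G)) = range ((*v) ?G)"
    using linear_subspace_image[OF matrix_vector_mul_linear subspace_UNIV] by (simp add: span_eq_iff)
  obtain y z where yz: "y \<in> range ((*v) ?G)" "\<forall>w\<in>range ((*v) ?G). orthogonal z w" "?r = y + z"
    using orthogonal_subspace_decomp_exists[of "range ((*v) ?G)" ?r] sp by metis
  have Gz: "?G *v z = 0" using sym_perp_ker[OF gram_sym yz(2)] .
  define B where "B = (\<Sum>i\<in>UNIV. z$i *\<^sub>R (A$i ** Y))"
  have "B \<bullet> B = z \<bullet> (?G *v z)"
    unfolding B_def
    by (simp add: inner_sum_left inner_sum_right inner_vec_def[of z] matrix_vector_mult_def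
        Gram_def frob_inner sum_distrib_left algebra_simps inner_commute)
  then have "B = 0" using Gz by simp
  have "?r \<bullet> z = B \<bullet> (C ** Y)"
    unfolding B_def
    by (simp add: inner_sum_left inner_vec_def[of "?r"] ri frob_inner algebra_simps)
  then have "?r \<bullet> z = 0" using \<open>B = 0\<close> by simp
  moreover have "y \<bullet> z = 0" using yz(1,2) by (auto simp: orthogonal_def inner_commute)
  ultimately have "z \<bullet> z = 0" using yz(3) by (simp add: inner_add_left)
  then have "z = 0" by simp
  then show ?thesis using yz by simp
qed

lemma grad_orth:
  fixes A :: "(real^'n^'n)^'m" and Y :: "real^'p^'n"
  shows "frob (A$i ** Y) (Smat A C Y ** Y) = 0"
proof -
  let ?G = "Gram A Y"
  let ?r = "opA A (C ** Y ** transpose Y)"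
  let ?mu = "mu A C Y"
  obtain w where w: "?r = ?G *v w" using r_in_range by blast
  have Gmu: "?G *v ?mu = ?r"
    unfolding mu_def w
    by (simp add: matrix_vector_mul_assoc matrix_mul_assoc pinv_sym[OF gram_sym])
  have ri: "?r$i = frob (A$i ** Y) (C ** Y)" for i
    by (simp add: opA_def frob_mul_right)
  have "frob (A$i ** Y) (opAadj A ?mu ** Y) = ?mu \<bullet> opA A (A$i ** Y ** transpose Y)"
    by (subst frob_comm) (simp add: frob_mul_right frob_adj)
  also have "\<dots> = (?G *v ?mu)$i"
  proof -
    have g: "frob (A$j) (A$i ** Y ** transpose Y) = ?G$i$j" for j
      using frob_mul_right[of "A$j" Y "A$i ** Y"] frob_comm[of "A$j ** Y" "A$i ** Y"]
      by (simp add: Gram_def)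
    show ?thesis
      by (simp add: inner_vec_def opA_def matrix_vector_mult_def g mult.commute)
  qed
  also have "\<dots> = frob (A$i ** Y) (C ** Y)" using Gmu ri by simp
  finally have e: "frob (A$i ** Y) (opAadj A ?mu ** Y) = frob (A$i ** Y) (C ** Y)" .
  have "frob (A$i ** Y) (Smat A C Y ** Y) = frob (A$i ** Y ** transpose Y) (C - opAadj A ?mu)"
    by (simp add: Smat_def frob_mul_right2)
  also have "\<dots> = frob (A$i ** Y) (C ** Y) - frob (A$i ** Y) (opAadj A ?mu ** Y)"
    by (simp add: frob_mul_right2) (simp add: frob_inner inner_diff_right)
  also have "\<dots> = 0" using e by simp
  finally show ?thesis .
qed


theorem lemma4:
  fixes A :: "(real^'n^'n)^'m" and b :: "real^'m" and C :: "real^'n^'n"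
    and Y :: "real^'p^'n" and eps_g eps_H fstar R :: real
  assumes symA: "\<forall>i. sym_mat (A$i)"
    and symC: "sym_mat C"
    and ne: "feas A b \<noteq> {}"
    and A1: "assumption1 A b TYPE('p)"
    and cpt: "compact (feas A b)"
    and fstar_def: "fstar = Inf ((\<lambda>X. frob C X) ` feas A b)"
    and R_def: "R = Sup (trace ` feas A b)"
    and eps_g: "0 \<le> eps_g" and eps_H: "0 \<le> eps_H"
    and YM: "Y \<in> Mp A b"
    and grad: "frob_norm (rgrad A C Y) \<le> eps_g"
    and hess: "psd (Smat A C Y + (eps_H / 2) *\<^sub>R mat 1)"
  shows "0 \<le> 2 * (gfun C Y - fstar)
         \<and> 2 * (gfun C Y - fstar) \<le> eps_H * R + eps_g * sqrt R
         \<and> (mat 1 \<in> range (opAadj A) \<longrightarrow> 2 * (gfun C Y - fstar) \<le> eps_H * R)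
         \<and> (((\<exists>t. \<forall>X\<in>feas A b. trace X = t) \<and> (\<exists>X\<in>feas A b. pd X))
              \<longrightarrow> mat 1 \<in> range (opAadj A))"
proof -
  define S where "S = Smat A C Y"
  define XY where "XY = Y ** transpose Y"
  define E where "E = eps_H / 2"
  have XYf: "XY \<in> feas A b" using YYt_feas[OF YM] by (simp add: XY_def)
  have g_eq: "gfun C Y = frob C XY" by (simp add: gfun_def XY_def frob_mul_right)
  have fC: "frob C X = frob S X + mu A C Y \<bullet> opA A X" for X
    by (simp add: S_def Smat_def frob_inner inner_diff_left frob_adj[symmetric])
  have opXY: "opA A XY = b" using XYf by (simp add: feas_def)
  have key: "gfun C Y - frob C X = frob S XY - frob S X" if "X \<in> feas A b" for X
    using that opXY fC[of X] fC[of XY] g_eq by (simp add: feas_def)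
  have trfun: "trace = (\<lambda>X. mat 1 \<bullet> X)" by (rule ext) (simp add: frob_mat1[symmetric] frob_inner)
  have bddT: "bdd_above (trace ` feas A b)"
  proof -
    have "compact (trace ` feas A b)" unfolding trfun
      by (rule compact_continuous_image[OF _ cpt]) (intro continuous_intros)
    then show ?thesis by (simp add: bounded_imp_bdd_above compact_imp_bounded)
  qed
  have bddC: "bdd_below ((\<lambda>X. frob C X) ` feas A b)"
  proof -
    have "compact ((\<lambda>X. frob C X) ` feas A b)" unfolding frob_inner
      by (rule compact_continuous_image[OF _ cpt]) (intro continuous_intros)
    then show ?thesis by (simp add: bounded_imp_bdd_below compact_imp_bounded)
  qed
  have trR: "trace X \<le> R" if "X \<in> feas A b" for X
    unfolding R_def using that bddT by (simp add: cSup_upper)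
  have Sbound: "- frob S X \<le> E * R" if "X \<in> feas A b" for X
  proof -
    have "psd X" using that by (simp add: feas_def)
    then have "0 \<le> frob (S + E *\<^sub>R mat 1) X" using psd_frob_nonneg hess by (simp add: S_def E_def)
    also have "\<dots> = frob S X + E * trace X"
      by (simp add: frob_mat1[symmetric] frob_inner inner_add_left)
    finally have "- frob S X \<le> E * trace X" by simp
    also have "\<dots> \<le> E * R" using trR[OF that] eps_H by (simp add: E_def mult_left_mono)
    finally show ?thesis .
  qed
  have normY: "norm Y \<le> sqrt R"
  proof -
    have "(norm Y)^2 = trace XY"
      unfolding power2_norm_eq_inner frob_inner[symmetric] frob_def XY_def by (rule trace_mul_sym)
    also have "\<dots> \<le> R" using trR[OF XYf] .
    finally show ?thesis using real_le_rsqrt by blast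
  qed
  have SYb: "norm (S ** Y) \<le> eps_g / 2"
    using grad by (simp add: rgrad_def frob_norm_eq S_def)
  have SXY: "frob S XY \<le> eps_g / 2 * sqrt R"
  proof -
    have "frob S XY = (S ** Y) \<bullet> Y" using frob_mul_right[of S Y Y] by (simp add: XY_def frob_inner)
    also have "\<dots> \<le> norm (S ** Y) * norm Y" by (rule norm_cauchy_schwarz)
    also have "\<dots> \<le> eps_g / 2 * sqrt R"
      by (rule mult_mono[OF SYb normY]) (simp_all add: eps_g)
    finally show ?thesis .
  qed
  have lower: "fstar \<le> gfun C Y"
    unfolding fstar_def g_eq using XYf bddC by (simp add: cInf_lower)
  have up_gen: "gfun C Y - B \<le> fstar" if "\<And>X. X \<in> feas A b \<Longrightarrow> gfun C Y - frob C X \<le> B" for B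
    unfolding fstar_def
  proof (rule cInf_greatest)
    show "(\<lambda>X. frob C X) ` feas A b \<noteq> {}" using ne by simp
    fix v assume "v \<in> (\<lambda>X. frob C X) ` feas A b"
    then obtain X where "X \<in> feas A b" "v = frob C X" by blast
    then show "gfun C Y - B \<le> v" using that by force
  qed
  have up1: "gfun C Y - (E * R + eps_g / 2 * sqrt R) \<le> fstar"
    by (rule up_gen) (use key Sbound SXY in force)
  have part3: "2 * (gfun C Y - fstar) \<le> eps_H * R" if m1: "mat 1 \<in> range (opAadj A)"
  proof -
    obtain \<nu> where nu: "mat 1 = opAadj A \<nu>" using m1 by blast
    have a: "frob S XY = frob (S ** Y) Y" by (simp add: XY_def frob_mul_right)
    have b: "frob (mat 1) (S ** Y ** transpose Y) = frob (mat 1 ** Y) (S ** Y)" by (simp only: frob_mul_right)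
    have "frob S XY = frob (mat 1) (S ** Y ** transpose Y)"
      unfolding a b matrix_mul_lid by (rule frob_comm)
    also have "\<dots> = \<nu> \<bullet> opA A (S ** Y ** transpose Y)" by (simp add: nu frob_adj)
    also have "opA A (S ** Y ** transpose Y) = 0"
      using grad_orth[of A _ Y C] by (simp add: opA_def vec_eq_iff frob_mul_right[symmetric] S_def)
    finally have "frob S XY = 0" by simp
    then have "gfun C Y - E * R \<le> fstar"
      by (intro up_gen) (use key Sbound in force)
    then show ?thesis by (simp add: E_def)
  qed
  have part4: "mat 1 \<in> range (opAadj A)"
    if "(\<exists>t. \<forall>X\<in>feas A b. trace X = t) \<and> (\<exists>X\<in>feas A b. pd X)"
    using that id_in_range[OF symA] by blast
  show ?thesis
    using lower up1 part3 part4 by (simp add: E_def algebra_simps)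
qed


end
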